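(* For each $i\in I$, the map $T\mapsto\widetilde\lambda_i(T)$ from $B(\mathcal H_i)$ to $B(\mathcal F)$ is a (non-unital) $*$-homomorphism, i.e. it is linear, $\widetilde\lambda_i(TS)=\widetilde\lambda_i(T)\widetilde\lambda_i(S)$ and $\widetilde\lambda_i(T^* )=\widetilde\lambda_i(T)^*$ for all $T,S\in B(\mathcal H_i)$.
   Context: Same setting as the V-monotone left representation: $(I,\le)$ totally ordered; $I_n$ the set of $(i_1,\dots,i_n)$ with $i_1>\dots>i_m<\dots<i_n$ for some $m$ (strict); $I_n(i)=\{(i_1,\dots,i_n)\in I_n:i_1=i\text{ or }(i,i_1,\dots,i_n)\in I_{n+1}\}$. $(\mathcal H_i,\xi_i)$ Hilbert spaces with unit vectors, $\mathring{\mathcal H}_i=\mathcal H_i\ominus\mathbb{C}\xi_i$; $\mathcal F=\mathbb{C}\xi\oplus\bigoplus_{n\ge1}\bigoplus_{i_1\ne\dots\ne i_n}\mathring{\mathcal H}_{i_1}\otimes\dots\otimes\mathring{\mathcal H}_{i_n}$ (consecutive indices distinct), $\mathcal F_i$ the subspace with $i_1\ne i$; $V_i:\mathcal H_i\otimes\mathcal F_i\to\mathcal F$ the unitary $V_i(\xi_i\otimes\xi)=\xi$, $V_i(x\otimes\xi)=x$, $V_i(\xi_i\otimes v)=v$, $V_i(x\otimes v)=x\otimes v$; $\lambda_i(T)=V_i(T\otimes\mathrm{id})V_i^{-1}$; $U_i$ the orthogonal projection onto $\mathcal V_i=\mathbb{C}\xi\oplus\bigoplus_{n\ge1}\bigoplus_{(i_1,\dots,i_n)\in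 I_n(i)}\mathring{\mathcal H}_{i_1}\otimes\dots\otimes\mathring{\mathcal H}_{i_n}$; $\widetilde\lambda_i(T)=U_i\lambda_i(T)U_i$. *)

theory Defs
  imports "HOL-Analysis.Analysis"
begin

definition l2 :: "'a set \<Rightarrow> ('a \<Rightarrow> complex) set" where
  "l2 S = {f. (\<forall>x. x \<notin> S \<longrightarrow> f x = 0) \<and> (\<lambda>x. (cmod (f x))\<^sup>2) summable_on S}"

definition l2_inner :: "'a set \<Rightarrow> ('a \<Rightarrow> complex) \<Rightarrow> ('a \<Rightarrow> complex) \<Rightarrow> complex" where
  "l2_inner S f g = (\<Sum>\<^sub>\<infinity>x\<in>S. cnj (f x) * g x)"

definition l2_norm :: "'a set \<Rightarrow> ('a \<Rightarrow> complex) \<Rightarrow> real" where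
  "l2_norm S f = sqrt (\<Sum>\<^sub>\<infinity>x\<in>S. (cmod (f x))\<^sup>2)"

text \<open>T is a bounded linear operator on l2(S) (values outside l2(S) are irrelevant junk).\<close>
definition bounded_op :: "'a set \<Rightarrow> (('a \<Rightarrow> complex) \<Rightarrow> ('a \<Rightarrow> complex)) \<Rightarrow> bool" where
  "bounded_op S T \<longleftrightarrow>
     (\<forall>f\<in>l2 S. T f \<in> l2 S) \<and>
     (\<forall>f\<in>l2 S. \<forall>g\<in>l2 S. \<forall>a b. T (\<lambda>x. a * f x + b * g x) = (\<lambda>x. a * T f x + b * T g x)) \<and>
     (\<exists>K. \<forall>f\<in>l2 S. l2_norm S (T f) \<le> K * l2_norm S f)"

definition is_adjoint :: "'a set \<Rightarrow> (('a \<Rightarrow> complex) \<Rightarrow> ('a \<Rightarrow> complex)) \<Rightarrow>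
     (('a \<Rightarrow> complex) \<Rightarrow> ('a \<Rightarrow> complex)) \<Rightarrow> bool" where
  "is_adjoint S T T' \<longleftrightarrow> bounded_op S T' \<and>
     (\<forall>f\<in>l2 S. \<forall>g\<in>l2 S. l2_inner S (T f) g = l2_inner S f (T' g))"

definition vshaped :: "'i::linorder list \<Rightarrow> bool" where
  "vshaped xs \<longleftrightarrow> (\<exists>m. 0 < m \<and> m \<le> length xs \<and>
      sorted_wrt (>) (take m xs) \<and> sorted_wrt (<) (drop (m - 1) xs))"

definition In_at :: "'i::linorder \<Rightarrow> 'i list \<Rightarrow> bool" where
  "In_at i xs \<longleftrightarrow> vshaped xs \<and> (hd xs = i \<or> vshaped (i # xs))"

section \<open>Spaces H_i = l2({None} \<union> Some ` B i) (None = xi_i) and the Fock space\<close>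

definition Hbasis :: "('i \<Rightarrow> 'b set) \<Rightarrow> 'i \<Rightarrow> 'b option set" where
  "Hbasis B i = insert None (Some ` B i)"

text \<open>Basis of the free product Fock space: words of basis vectors of the
  reduced spaces with consecutive indices distinct; [] is the vacuum xi.\<close>
definition fock_words :: "('i \<Rightarrow> 'b set) \<Rightarrow> ('i \<times> 'b) list set" where
  "fock_words B = {w. (\<forall>(j, b)\<in>set w. b \<in> B j) \<and>
      (\<forall>k. Suc k < length w \<longrightarrow> fst (w ! k) \<noteq> fst (w ! Suc k))}"

text \<open>The unitary V_i : H_i \<otimes> F_i \<rightarrow> F on basis vectors, and its inverse.\<close>
definition Vjoin :: "'i \<Rightarrow> 'b option \<times> ('i \<times> 'b) list \<Rightarrow> ('i \<times> 'b) list" where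
  "Vjoin i p = (case fst p of None \<Rightarrow> snd p | Some b \<Rightarrow> (i, b) # snd p)"

definition Vsplit :: "'i \<Rightarrow> ('i \<times> 'b) list \<Rightarrow> 'b option \<times> ('i \<times> 'b) list" where
  "Vsplit i w = (case w of [] \<Rightarrow> (None, [])
      | (j, b) # w' \<Rightarrow> (if j = i then (Some b, w') else (None, w)))"

text \<open>lambda_i(T) = V_i (T \<otimes> id) V_i^{-1}, written in coordinates.\<close>
definition lambda_op :: "('i \<Rightarrow> 'b set) \<Rightarrow> 'i \<Rightarrow>
    (('b option \<Rightarrow> complex) \<Rightarrow> ('b option \<Rightarrow> complex)) \<Rightarrow>
    (('i \<times> 'b) list \<Rightarrow> complex) \<Rightarrow> (('i \<times> 'b) list \<Rightarrow> complex)" where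
  "lambda_op B i T v = (\<lambda>w. if w \<in> fock_words B then
      T (\<lambda>a'. v (Vjoin i (a', snd (Vsplit i w)))) (fst (Vsplit i w)) else 0)"

definition Vwords :: "('i::linorder \<Rightarrow> 'b set) \<Rightarrow> 'i \<Rightarrow> ('i \<times> 'b) list set" where
  "Vwords B i = {w \<in> fock_words B. w = [] \<or> In_at i (map fst w)}"

definition U_proj :: "('i::linorder \<Rightarrow> 'b set) \<Rightarrow> 'i \<Rightarrow>
    (('i \<times> 'b) list \<Rightarrow> complex) \<Rightarrow> (('i \<times> 'b) list \<Rightarrow> complex)" where
  "U_proj B i v = (\<lambda>w. if w \<in> Vwords B i then v w else 0)"

definition tilde_lambda :: "('i::linorder \<Rightarrow> 'b set) \<Rightarrow> 'i \<Rightarrow>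
    (('b option \<Rightarrow> complex) \<Rightarrow> ('b option \<Rightarrow> complex)) \<Rightarrow>
    (('i \<times> 'b) list \<Rightarrow> complex) \<Rightarrow> (('i \<times> 'b) list \<Rightarrow> complex)" where
  "tilde_lambda B i T v = U_proj B i (lambda_op B i T (U_proj B i v))"

end

theory Submission imports Defs begin

definition Rset :: "('i::linorder \<Rightarrow> 'b set) \<Rightarrow> 'i \<Rightarrow> ('i \<times> 'b) list set" where
  "Rset B i = {r \<in> fock_words B. r = [] \<or> fst (hd r) \<noteq> i}"

lemma fock_Nil[simp]: "[] \<in> fock_words B"
  by (simp add: fock_words_def)

lemma fock_Cons: "((j,b)#w \<in> fock_words B) \<longleftrightarrow> b \<in> B j \<and> w \<in> fock_words B \<and> (w = [] \<or> fst (hd w) \<noteq> j)"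
proof
  assume h: "(j,b)#w \<in> fock_words B"
  hence A: "\<forall>(j', b')\<in>set ((j,b)#w). b' \<in> B j'" and
    C: "\<forall>k. Suc k < length ((j,b)#w) \<longrightarrow> fst (((j,b)#w) ! k) \<noteq> fst (((j,b)#w) ! Suc k)"
    by (auto simp: fock_words_def)
  have 1: "b \<in> B j" using A by auto
  have 2: "w \<in> fock_words B"
    unfolding fock_words_def using A C[rule_format, of "Suc _"] by auto
  have 3: "w = [] \<or> fst (hd w) \<noteq> j"
    using C[rule_format, of 0] by (cases w) auto
  show "b \<in> B j \<and> w \<in> fock_words B \<and> (w = [] \<or> fst (hd w) \<noteq> j)" using 1 2 3 by blast
next
  assume h: "b \<in> B j \<and> w \<in> fock_words B \<and> (w = [] \<or> fst (hd w) \<noteq> j)"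
  show "(j,b)#w \<in> fock_words B"
    unfolding fock_words_def
  proof (intro CollectI conjI allI impI)
    show "\<forall>(j', b')\<in>set ((j,b)#w). b' \<in> B j'" using h by (auto simp: fock_words_def)
    fix k assume k: "Suc k < length ((j, b) # w)"
    show "fst (((j, b) # w) ! k) \<noteq> fst (((j, b) # w) ! Suc k)"
    proof (cases k)
      case 0 thus ?thesis using h k by (cases w) auto
    next
      case (Suc k') thus ?thesis using h k by (auto simp: fock_words_def)
    qed
  qed
qed

lemma vshaped_single[simp]: "vshaped [x]"
  unfolding vshaped_def by (rule exI[of _ 1]) simp

lemma vshaped_tl: assumes "vshaped (x#xs)" "xs \<noteq> []" shows "vshaped xs"
proof -
  obtain m where m: "0 < m" "m \<le> length (x#xs)" "sorted_wrt (>) (take m (x#xs))"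
     "sorted_wrt (<) (drop (m - 1) (x#xs))" using assms(1) unfolding vshaped_def by blast
  show ?thesis
  proof (cases "m = 1")
    case True
    then show ?thesis using m assms(2) unfolding vshaped_def
      by (intro exI[of _ 1]) (cases xs, auto)
  next
    case False
    then obtain m' where m': "m = Suc (Suc m')" using m(1) by (cases m; cases "m - 1") auto
    show ?thesis using m m' unfolding vshaped_def
      by (intro exI[of _ "Suc m'"]) auto
  qed
qed

lemma vshaped_Nil[simp]: "\<not> vshaped []"
  by (simp add: vshaped_def)

lemma Vsplit_Vjoin: "r \<in> Rset B i \<Longrightarrow> Vsplit i (Vjoin i (a, r)) = (a, r)"
  by (cases a; cases r) (auto simp: Rset_def Vsplit_def Vjoin_def)

lemma Vjoin_fock: "r \<in> Rset B i \<Longrightarrow> a \<in> Hbasis B i \<Longrightarrow> Vjoin i (a, r) \<in> fock_words B"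
  by (cases a) (auto simp: Rset_def Vjoin_def Hbasis_def fock_Cons)

lemma Vjoin_notfock: "a \<notin> Hbasis B i \<Longrightarrow> Vjoin i (a, r) \<notin> fock_words B"
  by (cases a) (auto simp: Vjoin_def Hbasis_def fock_Cons)

lemma Vsplit_fock:
  assumes "w \<in> fock_words B"
  shows "snd (Vsplit i w) \<in> Rset B i" "fst (Vsplit i w) \<in> Hbasis B i"
        "Vjoin i (fst (Vsplit i w), snd (Vsplit i w)) = w"
  using assms
  by (cases w; auto simp: Rset_def Vsplit_def Vjoin_def Hbasis_def fock_Cons split: prod.splits)+

lemma Vjoin_inj: "Vjoin i (a, r) = Vjoin i (a', r') \<Longrightarrow> r \<in> Rset B i \<Longrightarrow> r' \<in> Rset B i \<Longrightarrow> a = a' \<and> r = r'"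
  by (metis Vsplit_Vjoin prod.inject)

lemma Vjoin_inj1: "Vjoin i (a, r) = Vjoin i (a', r) \<Longrightarrow> a = a'"
  by (cases a; cases a') (auto simp: Vjoin_def)

lemma Vwords_iff:
  assumes r: "r \<in> Rset B i" and a: "a \<in> Hbasis B i"
  shows "Vjoin i (a, r) \<in> Vwords B i \<longleftrightarrow> r \<in> Vwords B i"
proof (cases a)
  case None thus ?thesis by (simp add: Vjoin_def)
next
  case (Some b)
  have f: "(i,b)#r \<in> fock_words B" using Vjoin_fock[OF r a] Some by (simp add: Vjoin_def)
  have rf: "r \<in> fock_words B" and rh: "r = [] \<or> fst (hd r) \<noteq> i" using r by (auto simp: Rset_def)
  have "Vjoin i (a, r) \<in> Vwords B i \<longleftrightarrow> vshaped (i # map fst r)"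
    using f Some by (simp add: Vjoin_def Vwords_def In_at_def)
  also have "\<dots> \<longleftrightarrow> r \<in> Vwords B i"
  proof (cases r)
    case Nil thus ?thesis by (simp add: Vwords_def)
  next
    case (Cons p r')
    thus ?thesis using rf rh vshaped_tl[of i "map fst r"]
      by (auto simp: Vwords_def In_at_def)
  qed
  finally show ?thesis .
qed


definition slice :: "'i \<Rightarrow> (('i \<times> 'b) list \<Rightarrow> complex) \<Rightarrow> ('i \<times> 'b) list \<Rightarrow> 'b option \<Rightarrow> complex" where
  "slice i v r = (\<lambda>a. v (Vjoin i (a, r)))"

lemma l2_sq_UNIV: "v \<in> l2 S \<Longrightarrow> (\<lambda>x. (cmod (v x))\<^sup>2) summable_on UNIV"
  unfolding l2_def by (subst summable_on_cong_neutral[where T=S]) auto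

lemma l2_zero: "v \<in> l2 S \<Longrightarrow> x \<notin> S \<Longrightarrow> v x = 0"
  unfolding l2_def by auto

lemma Vwords_sub: "Vwords B i \<subseteq> fock_words B"
  unfolding Vwords_def by auto

lemma U_l2: assumes "v \<in> l2 (fock_words B)" shows "U_proj B i v \<in> l2 (fock_words B)"
proof -
  have "(\<lambda>x. (cmod (U_proj B i v x))\<^sup>2) summable_on fock_words B"
    by (rule summable_on_comparison_test[where f="\<lambda>x. (cmod (v x))\<^sup>2"])
       (use assms in \<open>auto simp: l2_def U_proj_def\<close>)
  thus ?thesis using assms Vwords_sub unfolding l2_def U_proj_def by auto
qed

lemma slice_l2: assumes "v \<in> l2 (fock_words B)" shows "slice i v r \<in> l2 (Hbasis B i)"
proof -
  have inj: "inj_on (\<lambda>a. Vjoin i (a, r)) (Hbasis B i)"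
    by (auto intro: inj_onI dest: Vjoin_inj1)
  have "(\<lambda>x. (cmod (v x))\<^sup>2) summable_on ((\<lambda>a. Vjoin i (a, r)) ` Hbasis B i)"
    by (rule summable_on_subset[OF l2_sq_UNIV[OF assms]]) auto
  hence "((\<lambda>x. (cmod (v x))\<^sup>2) \<circ> (\<lambda>a. Vjoin i (a, r))) summable_on Hbasis B i"
    using summable_on_reindex[OF inj] by blast
  moreover have "\<forall>x. x \<notin> Hbasis B i \<longrightarrow> v (Vjoin i (x, r)) = 0"
    by (intro allI impI l2_zero[OF assms] Vjoin_notfock)
  ultimately show ?thesis unfolding l2_def slice_def by (auto simp: o_def)
qed

lemma bij_J: "bij_betw (\<lambda>(r, a). Vjoin i (a, r)) (Rset B i \<times> Hbasis B i) (fock_words B)"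
  unfolding bij_betw_def
proof
  show "inj_on (\<lambda>(r, a). Vjoin i (a, r)) (Rset B i \<times> Hbasis B i)"
    by (auto intro!: inj_onI dest: Vjoin_inj)
  show "(\<lambda>(r, a). Vjoin i (a, r)) ` (Rset B i \<times> Hbasis B i) = fock_words B"
  proof
    show "(\<lambda>(r, a). Vjoin i (a, r)) ` (Rset B i \<times> Hbasis B i) \<subseteq> fock_words B"
      using Vjoin_fock by auto
    show "fock_words B \<subseteq> (\<lambda>(r, a). Vjoin i (a, r)) ` (Rset B i \<times> Hbasis B i)"
    proof
      fix w assume w: "w \<in> fock_words B"
      show "w \<in> (\<lambda>(r, a). Vjoin i (a, r)) ` (Rset B i \<times> Hbasis B i)"
        using Vsplit_fock[OF w, of i]
        by (intro image_eqI[of _ _ "(snd (Vsplit i w), fst (Vsplit i w))"]) auto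
    qed
  qed
qed

lemma fock_sum_reindex:
  "(\<lambda>(r,a). f (Vjoin i (a, r))) summable_on (Rset B i \<times> Hbasis B i) \<longleftrightarrow> f summable_on fock_words B"
  "infsum (\<lambda>(r,a). f (Vjoin i (a, r))) (Rset B i \<times> Hbasis B i) = infsum f (fock_words B)"
  using summable_on_reindex_bij_betw[OF bij_J, of f i] infsum_reindex_bij_betw[OF bij_J, of f i]
  by (simp_all add: case_prod_beta')

lemma l2_prod_summable:
  assumes "f \<in> l2 S" "g \<in> l2 S"
  shows "(\<lambda>x. cnj (f x) * g x) summable_on S"
proof (rule abs_summable_summable)
  have "(\<lambda>x. (cmod (f x))\<^sup>2 + (cmod (g x))\<^sup>2) summable_on S"
    using assms by (intro summable_on_add) (auto simp: l2_def)
  moreover have "norm (cnj (f x) * g x) \<le> (cmod (f x))\<^sup>2 + (cmod (g x))\<^sup>2" for x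
  proof -
    have h: "2 * cmod (f x) * cmod (g x) \<le> (cmod (f x))\<^sup>2 + (cmod (g x))\<^sup>2"
      by (rule sum_squares_bound)
    have "cmod (f x) * cmod (g x) \<le> 2 * cmod (f x) * cmod (g x)" by simp
    moreover have "norm (cnj (f x) * g x) = cmod (f x) * cmod (g x)" by (simp add: norm_mult)
    ultimately show ?thesis using h by linarith
  qed
  ultimately show "(\<lambda>x. norm (cnj (f x) * g x)) summable_on S"
    by (rule summable_on_comparison_test) auto
qed

lemma inner_decomp:
  assumes f: "f \<in> l2 (fock_words B)" and g: "g \<in> l2 (fock_words B)"
  shows "l2_inner (fock_words B) f g
       = infsum (\<lambda>r. l2_inner (Hbasis B i) (slice i f r) (slice i g r)) (Rset B i)"
proof -
  let ?p = "\<lambda>w. cnj (f w) * g w"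
  have s: "(\<lambda>(r,a). ?p (Vjoin i (a, r))) summable_on (Rset B i \<times> Hbasis B i)"
    using fock_sum_reindex(1)[of ?p i B] l2_prod_summable[OF f g] by simp
  have "l2_inner (fock_words B) f g = infsum (\<lambda>(r,a). ?p (Vjoin i (a, r))) (Rset B i \<times> Hbasis B i)"
    unfolding l2_inner_def using fock_sum_reindex(2)[of ?p i B] by simp
  also have "\<dots> = infsum (\<lambda>r. infsum (\<lambda>a. ?p (Vjoin i (a, r))) (Hbasis B i)) (Rset B i)"
    using infsum_Sigma_banach[OF s] by simp
  finally show ?thesis unfolding l2_inner_def slice_def .
qed

lemma sq_decomp:
  assumes f: "f \<in> l2 (fock_words B)"
  shows "infsum (\<lambda>w. (cmod (f w))\<^sup>2) (fock_words B)
       = infsum (\<lambda>r. infsum (\<lambda>a. (cmod (slice i f r a))\<^sup>2) (Hbasis B i)) (Rset B i)"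
    "(\<lambda>r. infsum (\<lambda>a. (cmod (slice i f r a))\<^sup>2) (Hbasis B i)) summable_on (Rset B i)"
proof -
  let ?p = "\<lambda>w. (cmod (f w))\<^sup>2"
  have s: "(\<lambda>(r,a). ?p (Vjoin i (a, r))) summable_on (Rset B i \<times> Hbasis B i)"
    using fock_sum_reindex(1)[of ?p i B] f by (simp add: l2_def)
  have "infsum ?p (fock_words B) = infsum (\<lambda>(r,a). ?p (Vjoin i (a, r))) (Rset B i \<times> Hbasis B i)"
    using fock_sum_reindex(2)[of ?p i B] by simp
  also have "\<dots> = infsum (\<lambda>r. infsum (\<lambda>a. ?p (Vjoin i (a, r))) (Hbasis B i)) (Rset B i)"
    using infsum_Sigma_banach[OF s] by simp
  finally show "infsum ?p (fock_words B)
       = infsum (\<lambda>r. infsum (\<lambda>a. (cmod (slice i f r a))\<^sup>2) (Hbasis B i)) (Rset B i)"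
    unfolding slice_def .
  have fib: "\<And>r. (\<lambda>a. ?p (Vjoin i (a, r))) summable_on Hbasis B i"
  proof -
    fix r
    have "slice i f r \<in> l2 (Hbasis B i)" by (rule slice_l2[OF f])
    thus "(\<lambda>a. ?p (Vjoin i (a, r))) summable_on Hbasis B i" by (simp add: l2_def slice_def)
  qed
  have "(\<lambda>r. infsum (\<lambda>a. ?p (Vjoin i (a, r))) (Hbasis B i)) summable_on (Rset B i)"
    using summable_on_SigmaD[where f="\<lambda>(r,a). ?p (Vjoin i (a, r))" and A="Rset B i" and B="\<lambda>_. Hbasis B i", OF s] fib by simp
  thus "(\<lambda>r. infsum (\<lambda>a. (cmod (slice i f r a))\<^sup>2) (Hbasis B i)) summable_on (Rset B i)"
    unfolding slice_def .
qed

lemma tl_value: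
  assumes r: "r \<in> Rset B i" and a: "a \<in> Hbasis B i"
  shows "tilde_lambda B i T v (Vjoin i (a, r))
     = (if r \<in> Vwords B i then T (slice i (U_proj B i v) r) a else 0)"
proof -
  have e: "snd (Vsplit i (Vjoin i (a, r))) = r" "fst (Vsplit i (Vjoin i (a, r))) = a"
    using Vsplit_Vjoin[OF r, of a] by auto
  have f: "Vjoin i (a, r) \<in> fock_words B" by (rule Vjoin_fock[OF r a])
  show ?thesis
  proof (cases "r \<in> Vwords B i")
    case True
    hence "Vjoin i (a, r) \<in> Vwords B i" using Vwords_iff[OF r a] by simp
    thus ?thesis using True f unfolding tilde_lambda_def U_proj_def lambda_op_def slice_def e by simp
  next
    case False
    hence "Vjoin i (a, r) \<notin> Vwords B i" using Vwords_iff[OF r a] by simp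
    thus ?thesis using False unfolding tilde_lambda_def U_proj_def by simp
  qed
qed

lemma tl_out: "w \<notin> Vwords B i \<Longrightarrow> tilde_lambda B i T v w = 0"
  unfolding tilde_lambda_def U_proj_def by simp


lemma bop_lin: "bounded_op S T \<Longrightarrow> f \<in> l2 S \<Longrightarrow> g \<in> l2 S \<Longrightarrow>
   T (\<lambda>x. a * f x + b * g x) = (\<lambda>x. a * T f x + b * T g x)"
  unfolding bounded_op_def by blast

lemma bop_l2: "bounded_op S T \<Longrightarrow> f \<in> l2 S \<Longrightarrow> T f \<in> l2 S"
  unfolding bounded_op_def by blast

lemma tl_lin:
  assumes T: "bounded_op (Hbasis B i) T" and f: "f \<in> l2 (fock_words B)" and g: "g \<in> l2 (fock_words B)"
  shows "tilde_lambda B i T (\<lambda>x. a * f x + b * g x) = (\<lambda>x. a * tilde_lambda B i T f x + b * tilde_lambda B i T g x)"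
proof (rule ext)
  fix w
  show "tilde_lambda B i T (\<lambda>x. a * f x + b * g x) w = a * tilde_lambda B i T f w + b * tilde_lambda B i T g w"
  proof (cases "w \<in> Vwords B i")
    case False thus ?thesis by (simp add: tl_out)
  next
    case True
    hence wf: "w \<in> fock_words B" using Vwords_sub by auto
    let ?r = "snd (Vsplit i w)"
    have U: "U_proj B i (\<lambda>x. a * f x + b * g x) = (\<lambda>y. a * U_proj B i f y + b * U_proj B i g y)"
      by (auto simp: U_proj_def)
    have lin: "T (\<lambda>x. a * slice i (U_proj B i f) ?r x + b * slice i (U_proj B i g) ?r x)
       = (\<lambda>x. a * T (slice i (U_proj B i f) ?r) x + b * T (slice i (U_proj B i g) ?r) x)"
      by (rule bop_lin[OF T slice_l2[OF U_l2[OF f]] slice_l2[OF U_l2[OF g]]])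
    show ?thesis using True wf lin
      unfolding tilde_lambda_def lambda_op_def U
      by (simp add: U_proj_def slice_def)
  qed
qed

lemma tl_bound:
  assumes T: "bounded_op (Hbasis B i) T"
    and K: "\<forall>f\<in>l2 (Hbasis B i). l2_norm (Hbasis B i) (T f) \<le> K * l2_norm (Hbasis B i) f"
    and K0: "0 \<le> K"
    and v: "v \<in> l2 (fock_words B)"
  shows "tilde_lambda B i T v \<in> l2 (fock_words B)
     \<and> l2_norm (fock_words B) (tilde_lambda B i T v) \<le> K * l2_norm (fock_words B) v"
proof -
  define u where "u = U_proj B i v"
  have u: "u \<in> l2 (fock_words B)" unfolding u_def by (rule U_l2[OF v])
  define s where "s r = infsum (\<lambda>a. (cmod (slice i u r a))\<^sup>2) (Hbasis B i)" for r
  have s_sum: "s summable_on Rset B i" unfolding s_def by (rule sq_decomp(2)[OF u])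
  have s_inf: "infsum s (Rset B i) = infsum (\<lambda>w. (cmod (u w))\<^sup>2) (fock_words B)"
    unfolding s_def by (rule sq_decomp(1)[OF u, symmetric])
  define t where "t r = (if r \<in> Vwords B i then infsum (\<lambda>a. (cmod (T (slice i u r) a))\<^sup>2) (Hbasis B i) else 0)" for r
  define \<phi> where "\<phi> = (\<lambda>(r, a). (cmod (tilde_lambda B i T v (Vjoin i (a, r))))\<^sup>2)"
  have fib: "((\<lambda>a. \<phi> (r, a)) has_sum t r) (Hbasis B i)" if r: "r \<in> Rset B i" for r
  proof (cases "r \<in> Vwords B i")
    case True
    have "T (slice i u r) \<in> l2 (Hbasis B i)" by (rule bop_l2[OF T slice_l2[OF u]])
    hence "((\<lambda>a. (cmod (T (slice i u r) a))\<^sup>2) has_sum t r) (Hbasis B i)"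
      using True unfolding t_def l2_def by simp
    thus ?thesis
      by (rule has_sum_cong[THEN iffD1, rotated])
         (use True r in \<open>simp add: \<phi>_def tl_value u_def\<close>)
  next
    case False
    have "t r = 0" using False by (simp add: t_def)
    moreover have "((\<lambda>a. \<phi> (r, a)) has_sum 0) (Hbasis B i)"
      by (rule has_sum_0) (simp add: \<phi>_def tl_value[OF r] False)
    ultimately show ?thesis by simp
  qed
  have t0: "0 \<le> t r" for r unfolding t_def by (auto intro: infsum_nonneg)
  have ts: "t r \<le> K\<^sup>2 * s r" if r: "r \<in> Rset B i" for r
  proof (cases "r \<in> Vwords B i")
    case True
    let ?A = "infsum (\<lambda>a. (cmod (T (slice i u r) a))\<^sup>2) (Hbasis B i)"
    have A0: "0 \<le> ?A" by (intro infsum_nonneg) simp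
    have B0: "0 \<le> s r" unfolding s_def by (intro infsum_nonneg) simp
    have "sqrt ?A \<le> K * sqrt (s r)"
      using K slice_l2[OF u, of i r] unfolding l2_norm_def s_def by blast
    hence "(sqrt ?A)\<^sup>2 \<le> (K * sqrt (s r))\<^sup>2"
      using A0 by (intro power_mono) auto
    hence "?A \<le> K\<^sup>2 * s r" using A0 B0 by (simp add: power_mult_distrib)
    thus ?thesis using True unfolding t_def by simp
  next
    case False
    have "0 \<le> s r" unfolding s_def by (intro infsum_nonneg) simp
    thus ?thesis using False unfolding t_def by simp
  qed
  have Ks: "(\<lambda>r. K\<^sup>2 * s r) summable_on Rset B i" by (rule summable_on_cmult_right[OF s_sum])
  have t_sum: "t summable_on Rset B i"
    by (rule summable_on_comparison_test[OF Ks]) (use ts t0 in auto)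
  have phi_sum: "\<phi> summable_on (Rset B i \<times> Hbasis B i)"
    by (rule summable_on_SigmaI[where g=t, OF fib t_sum]) (auto simp: \<phi>_def)
  have phi_has: "(\<phi> has_sum infsum t (Rset B i)) (Rset B i \<times> Hbasis B i)"
    by (rule has_sum_SigmaI[OF fib has_sum_infsum[OF t_sum] phi_sum])
  have sq_sum: "(\<lambda>w. (cmod (tilde_lambda B i T v w))\<^sup>2) summable_on fock_words B"
    using fock_sum_reindex(1)[of "\<lambda>w. (cmod (tilde_lambda B i T v w))\<^sup>2" i B] phi_sum
    unfolding \<phi>_def by simp
  have mem: "tilde_lambda B i T v \<in> l2 (fock_words B)"
    unfolding l2_def using sq_sum tl_out Vwords_sub by blast
  have "infsum (\<lambda>w. (cmod (tilde_lambda B i T v w))\<^sup>2) (fock_words B) = infsum \<phi> (Rset B i \<times> Hbasis B i)"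
    using fock_sum_reindex(2)[of "\<lambda>w. (cmod (tilde_lambda B i T v w))\<^sup>2" i B]
    unfolding \<phi>_def by simp
  also have "\<dots> = infsum t (Rset B i)" using phi_has by (rule infsumI)
  also have "\<dots> \<le> infsum (\<lambda>r. K\<^sup>2 * s r) (Rset B i)"
    by (rule infsum_mono[OF t_sum Ks ts])
  also have "\<dots> = K\<^sup>2 * infsum (\<lambda>w. (cmod (u w))\<^sup>2) (fock_words B)"
    using s_inf by (simp add: infsum_cmult_right[OF s_sum])
  also have "\<dots> \<le> K\<^sup>2 * infsum (\<lambda>w. (cmod (v w))\<^sup>2) (fock_words B)"
  proof (rule mult_left_mono)
    show "infsum (\<lambda>w. (cmod (u w))\<^sup>2) (fock_words B) \<le> infsum (\<lambda>w. (cmod (v w))\<^sup>2) (fock_words B)"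
      by (rule infsum_mono) (use u v in \<open>auto simp: l2_def u_def U_proj_def\<close>)
  qed simp
  finally have le: "infsum (\<lambda>w. (cmod (tilde_lambda B i T v w))\<^sup>2) (fock_words B)
      \<le> K\<^sup>2 * infsum (\<lambda>w. (cmod (v w))\<^sup>2) (fock_words B)" .
  have "l2_norm (fock_words B) (tilde_lambda B i T v) \<le> sqrt (K\<^sup>2 * infsum (\<lambda>w. (cmod (v w))\<^sup>2) (fock_words B))"
    unfolding l2_norm_def using le by (rule real_sqrt_le_mono)
  also have "\<dots> = K * l2_norm (fock_words B) v"
    using K0 by (simp add: l2_norm_def real_sqrt_mult)
  finally show ?thesis using mem by blast
qed

lemma tl_bounded:
  assumes T: "bounded_op (Hbasis B i) T"
  shows "bounded_op (fock_words B) (tilde_lambda B i T)"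
proof -
  obtain K where K: "\<forall>f\<in>l2 (Hbasis B i). l2_norm (Hbasis B i) (T f) \<le> K * l2_norm (Hbasis B i) f"
    using T unfolding bounded_op_def by blast
  have K': "\<forall>f\<in>l2 (Hbasis B i). l2_norm (Hbasis B i) (T f) \<le> max K 0 * l2_norm (Hbasis B i) f"
  proof
    fix f assume "f \<in> l2 (Hbasis B i)"
    hence "l2_norm (Hbasis B i) (T f) \<le> K * l2_norm (Hbasis B i) f" using K by blast
    moreover have "K * l2_norm (Hbasis B i) f \<le> max K 0 * l2_norm (Hbasis B i) f"
      by (intro mult_right_mono) (auto simp: l2_norm_def intro!: infsum_nonneg)
    ultimately show "l2_norm (Hbasis B i) (T f) \<le> max K 0 * l2_norm (Hbasis B i) f" by linarith
  qed
  note tb = tl_bound[OF T K', of _]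
  show ?thesis unfolding bounded_op_def
    using tb tl_lin[OF T] by auto
qed


lemma tl_comp:
  assumes T: "bounded_op (Hbasis B i) T" and S: "bounded_op (Hbasis B i) S"
    and v: "v \<in> l2 (fock_words B)"
  shows "tilde_lambda B i (T \<circ> S) v = tilde_lambda B i T (tilde_lambda B i S v)"
proof (rule ext)
  fix w
  show "tilde_lambda B i (T \<circ> S) v w = tilde_lambda B i T (tilde_lambda B i S v) w"
  proof (cases "w \<in> Vwords B i")
    case False thus ?thesis by (simp add: tl_out)
  next
    case True
    hence wf: "w \<in> fock_words B" using Vwords_sub by auto
    define r where "r = snd (Vsplit i w)"
    define a where "a = fst (Vsplit i w)"
    have r: "r \<in> Rset B i" and a: "a \<in> Hbasis B i" and w: "w = Vjoin i (a, r)"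
      using Vsplit_fock[OF wf, of i] unfolding r_def a_def by auto
    have rV: "r \<in> Vwords B i" using True Vwords_iff[OF r a] w by simp
    have sl: "slice i (U_proj B i (tilde_lambda B i S v)) r = S (slice i (U_proj B i v) r)"
    proof (rule ext)
      fix a'
      show "slice i (U_proj B i (tilde_lambda B i S v)) r a' = S (slice i (U_proj B i v) r) a'"
      proof (cases "a' \<in> Hbasis B i")
        case True
        have "Vjoin i (a', r) \<in> Vwords B i" using Vwords_iff[OF r True] rV by simp
        thus ?thesis using rV by (simp add: slice_def U_proj_def tl_value[OF r True])
      next
        case False
        have "Vjoin i (a', r) \<notin> Vwords B i" using Vjoin_notfock[OF False] Vwords_sub by blast
        moreover have "S (slice i (U_proj B i v) r) a' = 0"
          by (rule l2_zero[OF bop_l2[OF S slice_l2[OF U_l2[OF v]]] False])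
        ultimately show ?thesis by (simp add: slice_def U_proj_def)
      qed
    qed
    show ?thesis unfolding w tl_value[OF r a] using rV sl by simp
  qed
qed

lemma tl_slice_inner_left:
  assumes r: "r \<in> Rset B i"
  shows "l2_inner (Hbasis B i) (slice i (tilde_lambda B i T f) r) (slice i g r)
     = (if r \<in> Vwords B i then l2_inner (Hbasis B i) (T (slice i (U_proj B i f) r)) (slice i (U_proj B i g) r) else 0)"
proof (cases "r \<in> Vwords B i")
  case True
  show ?thesis using True unfolding l2_inner_def
    by (simp, intro infsum_cong) (simp add: slice_def tl_value[OF r] U_proj_def Vwords_iff[OF r])
next
  case False
  show ?thesis using False unfolding l2_inner_def
    by (simp, intro infsum_0) (simp add: slice_def tl_value[OF r])
qed

lemma tl_slice_inner_right:
  assumes r: "r \<in> Rset B i"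
  shows "l2_inner (Hbasis B i) (slice i f r) (slice i (tilde_lambda B i T g) r)
     = (if r \<in> Vwords B i then l2_inner (Hbasis B i) (slice i (U_proj B i f) r) (T (slice i (U_proj B i g) r)) else 0)"
proof (cases "r \<in> Vwords B i")
  case True
  show ?thesis using True unfolding l2_inner_def
    by (simp, intro infsum_cong) (simp add: slice_def tl_value[OF r] U_proj_def Vwords_iff[OF r])
next
  case False
  show ?thesis using False unfolding l2_inner_def
    by (simp, intro infsum_0) (simp add: slice_def tl_value[OF r])
qed

lemma tl_adj:
  assumes T: "bounded_op (Hbasis B i) T" and A: "is_adjoint (Hbasis B i) T T'"
  shows "is_adjoint (fock_words B) (tilde_lambda B i T) (tilde_lambda B i T')"
proof -
  have T': "bounded_op (Hbasis B i) T'" using A unfolding is_adjoint_def by blast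
  have adj: "\<And>x y. x \<in> l2 (Hbasis B i) \<Longrightarrow> y \<in> l2 (Hbasis B i) \<Longrightarrow>
      l2_inner (Hbasis B i) (T x) y = l2_inner (Hbasis B i) x (T' y)"
    using A unfolding is_adjoint_def by blast
  have "l2_inner (fock_words B) (tilde_lambda B i T f) g = l2_inner (fock_words B) f (tilde_lambda B i T' g)"
    if f: "f \<in> l2 (fock_words B)" and g: "g \<in> l2 (fock_words B)" for f g
  proof -
    have m1: "tilde_lambda B i T f \<in> l2 (fock_words B)"
      using tl_bounded[OF T] f unfolding bounded_op_def by blast
    have m2: "tilde_lambda B i T' g \<in> l2 (fock_words B)"
      using tl_bounded[OF T'] g unfolding bounded_op_def by blast
    have "l2_inner (fock_words B) (tilde_lambda B i T f) g
        = infsum (\<lambda>r. l2_inner (Hbasis B i) (slice i (tilde_lambda B i T f) r) (slice i g r)) (Rset B i)"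
      by (rule inner_decomp[OF m1 g])
    also have "\<dots> = infsum (\<lambda>r. l2_inner (Hbasis B i) (slice i f r) (slice i (tilde_lambda B i T' g) r)) (Rset B i)"
    proof (rule infsum_cong)
      fix r assume r: "r \<in> Rset B i"
      show "l2_inner (Hbasis B i) (slice i (tilde_lambda B i T f) r) (slice i g r)
          = l2_inner (Hbasis B i) (slice i f r) (slice i (tilde_lambda B i T' g) r)"
        unfolding tl_slice_inner_left[OF r] tl_slice_inner_right[OF r]
        using adj[OF slice_l2[OF U_l2[OF f]] slice_l2[OF U_l2[OF g]]] by simp
    qed
    also have "\<dots> = l2_inner (fock_words B) f (tilde_lambda B i T' g)"
      by (rule inner_decomp[OF f m2, symmetric])
    finally show ?thesis .
  qed
  thus ?thesis unfolding is_adjoint_def using tl_bounded[OF T'] by blast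
qed

theorem mainTheorem13:
  fixes B :: "'i::linorder \<Rightarrow> 'b set" and i :: 'i
  shows
   "(\<forall>T. bounded_op (Hbasis B i) T \<longrightarrow> bounded_op (fock_words B) (tilde_lambda B i T)) \<and>
    (\<forall>T S a b. bounded_op (Hbasis B i) T \<longrightarrow> bounded_op (Hbasis B i) S \<longrightarrow>
       (\<forall>v\<in>l2 (fock_words B).
          tilde_lambda B i (\<lambda>f x. a * T f x + b * S f x) v
            = (\<lambda>w. a * tilde_lambda B i T v w + b * tilde_lambda B i S v w))) \<and>
    (\<forall>T S. bounded_op (Hbasis B i) T \<longrightarrow> bounded_op (Hbasis B i) S \<longrightarrow>
       (\<forall>v\<in>l2 (fock_words B).
          tilde_lambda B i (T \<circ> S) v = tilde_lambda B i T (tilde_lambda B i S v))) \<and>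
    (\<forall>T T'. bounded_op (Hbasis B i) T \<longrightarrow> is_adjoint (Hbasis B i) T T' \<longrightarrow>
       is_adjoint (fock_words B) (tilde_lambda B i T) (tilde_lambda B i T'))"
proof (intro conjI allI impI ballI)
  show "bounded_op (fock_words B) (tilde_lambda B i T)" if "bounded_op (Hbasis B i) T" for T
    by (rule tl_bounded[OF that])
  show "tilde_lambda B i (\<lambda>f x. a * T f x + b * S f x) v
            = (\<lambda>w. a * tilde_lambda B i T v w + b * tilde_lambda B i S v w)" for T S a b v
    by (rule ext) (simp add: tilde_lambda_def U_proj_def lambda_op_def)
  show "tilde_lambda B i (T \<circ> S) v = tilde_lambda B i T (tilde_lambda B i S v)"
    if "bounded_op (Hbasis B i) T" "bounded_op (Hbasis B i) S" "v \<in> l2 (fock_words B)" for T S v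
    by (rule tl_comp[OF that])
  show "is_adjoint (fock_words B) (tilde_lambda B i T) (tilde_lambda B i T')"
    if "bounded_op (Hbasis B i) T" "is_adjoint (Hbasis B i) T T'" for T T'
    by (rule tl_adj[OF that])
qed

end
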